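(* Let $\Sigma$ be a graded alphabet and $L$ a finite tree language over $\Sigma$. Then the RWTA $A_L$ is a sequential RWTA that realizes $\mathrm{SubTreeSeries}_L$, i.e. $\mathbb{P}_{A_L}=\mathrm{SubTreeSeries}_L$.
   Context: A graded alphabet is a finite set $\Sigma=\bigcup_{k\in\mathbb{N}}\Sigma_k$; $T_\Sigma$ is the set of trees $f(t_1,\ldots,t_k)$ with $f\in\Sigma_k$. A RWTA (weights in $(\mathbb{N},+)$) is $A=(\Sigma,Q,\nu,\delta)$ with $Q$ finite, $\nu:Q\to\mathbb{N}$, $\delta\subseteq\bigcup_k Q\times\Sigma_k\times Q^k$; $\delta(f,q_1,\ldots,q_k)=\{q\mid(q,f,q_1,\ldots,q_k)\in\delta\}$, extended to subsets by union over tuples; $\nu(S)=\sum_{s\in S}\nu(s)$ ($\nu(\emptyset)=0$); $\Delta(f(t_1,\ldots,t_k))=\delta(f,\Delta(t_1),\ldots,\Delta(t_k))$; $\mathbb{P}_A(t)=\nu(\Delta(t))$; $A$ is sequential if $\mathrm{Card}(\Delta(t))\le1$ for all $t$. For $t=f(t_1,\ldots,t_k)$, $\mathrm{SubTree}(t)=\{t\}\cup\bigcup_j\mathrm{SubTree}(t_j)$; $\mathrm{SubTreeSet}(L)=\bigcup_{t\in L}\mathrm{SubTree}(t)$; $\mathrm{SubTreeSeries}_t(s)$ is the number of nodes of $t$ whose subtree equals $s$, and $\mathrm{SubTreeSeries}_L=\sum_{t\in L}\mathrm{SubTreeSeries}_t$. The sequential subtree automaton of $L$ is $A_L=(\Sigma,\mathrm{SubTreeSet}(L),\nu,\delta)$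 with $\nu(t')=\mathrm{SubTreeSeries}_L(t')$ and, for $f\in\Sigma_k$, $t_{k+1}\in\delta(f,t_1,\ldots,t_k)$ iff $t_{k+1}=f(t_1,\ldots,t_k)$. *)

theory Defs
  imports Main
begin

text \<open>Ranked trees. A graded alphabet is a finite set of ranked symbols (f, k),
  i.e. Sigma_k = {f. (f,k) \<in> Sigma}.\<close>

datatype 'f tree = Node 'f "'f tree list"

type_synonym 'f graded_alphabet = "('f \<times> nat) set"

definition graded_alphabet :: "'f graded_alphabet \<Rightarrow> bool" where
  "graded_alphabet \<Sigma> \<longleftrightarrow> finite \<Sigma>"

inductive_set trees :: "'f graded_alphabet \<Rightarrow> 'f tree set" for \<Sigma> where
  "(f, length ts) \<in> \<Sigma> \<Longrightarrow> (\<forall>t\<in>set ts. t \<in> trees \<Sigma>) \<Longrightarrow> Node f ts \<in> trees \<Sigma>"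

record ('f, 'q) rwta =
  states :: "'q set"
  weight :: "'q \<Rightarrow> nat"
  trans :: "('q \<times> 'f \<times> 'q list) set"

definition is_rwta :: "'f graded_alphabet \<Rightarrow> ('f, 'q) rwta \<Rightarrow> bool" where
  "is_rwta \<Sigma> A \<longleftrightarrow> finite (states A) \<and>
     (\<forall>(q, f, qs) \<in> trans A. q \<in> states A \<and> (f, length qs) \<in> \<Sigma> \<and> set qs \<subseteq> states A)"

definition delta_set :: "('q \<times> 'f \<times> 'q list) set \<Rightarrow> 'f \<Rightarrow> 'q set list \<Rightarrow> 'q set" where
  "delta_set \<delta> f Ss = {q. \<exists>qs. list_all2 (\<in>) qs Ss \<and> (q, f, qs) \<in> \<delta>}"

fun Delta :: "('q \<times> 'f \<times> 'q list) set \<Rightarrow> 'f tree \<Rightarrow> 'q set" where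
  "Delta \<delta> (Node f ts) = delta_set \<delta> f (map (Delta \<delta>) ts)"

definition realized :: "('f, 'q) rwta \<Rightarrow> 'f tree \<Rightarrow> nat" where
  "realized A t = (\<Sum>q \<in> Delta (trans A) t. weight A q)"

definition sequential :: "'f graded_alphabet \<Rightarrow> ('f, 'q) rwta \<Rightarrow> bool" where
  "sequential \<Sigma> A \<longleftrightarrow> (\<forall>t \<in> trees \<Sigma>. card (Delta (trans A) t) \<le> 1)"

fun SubTree :: "'f tree \<Rightarrow> 'f tree set" where
  "SubTree (Node f ts) = insert (Node f ts) (\<Union>t \<in> set ts. SubTree t)"

definition SubTreeSet :: "'f tree set \<Rightarrow> 'f tree set" where
  "SubTreeSet L = (\<Union>t \<in> L. SubTree t)"

fun SubTreeSeries_t :: "'f tree \<Rightarrow> 'f tree \<Rightarrow> nat" where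
  "SubTreeSeries_t (Node f ts) s =
     (if Node f ts = s then 1 else 0) + sum_list (map (\<lambda>c. SubTreeSeries_t c s) ts)"

definition SubTreeSeries :: "'f tree set \<Rightarrow> 'f tree \<Rightarrow> nat" where
  "SubTreeSeries L s = (\<Sum>t \<in> L. SubTreeSeries_t t s)"

definition subtree_automaton :: "'f graded_alphabet \<Rightarrow> 'f tree set \<Rightarrow> ('f, 'f tree) rwta" where
  "subtree_automaton \<Sigma> L =
     \<lparr> states = SubTreeSet L,
       weight = SubTreeSeries L,
       trans = {(q, f, qs). q \<in> SubTreeSet L \<and> set qs \<subseteq> SubTreeSet L \<and>
                            (f, length qs) \<in> \<Sigma> \<and> q = Node f qs} \<rparr>"

end

theory Submission
  imports Defs
begin

lemma Delta_sub: "Delta (trans (subtree_automaton \<Sigma> L)) t \<subseteq> {t}"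
proof (induction t)
  case (Node f ts)
  show ?case
  proof
    fix q assume "q \<in> Delta (trans (subtree_automaton \<Sigma> L)) (Node f ts)"
    then obtain qs where qs: "list_all2 (\<in>) qs (map (Delta (trans (subtree_automaton \<Sigma> L))) ts)" "q = Node f qs"
      by (auto simp: delta_set_def subtree_automaton_def)
    have len: "length qs = length ts" using qs(1) by (simp add: list_all2_conv_all_nth)
    have "\<And>i. i < length ts \<Longrightarrow> qs ! i = ts ! i"
    proof -
      fix i assume i: "i < length ts"
      have "qs ! i \<in> Delta (trans (subtree_automaton \<Sigma> L)) (ts ! i)"
        using qs(1) i by (auto simp: list_all2_conv_all_nth)
      moreover have "Delta (trans (subtree_automaton \<Sigma> L)) (ts ! i) \<subseteq> {ts ! i}"
        using Node.IH i by simp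
      ultimately show "qs ! i = ts ! i" by blast
    qed
    then have "qs = ts" using len by (simp add: nth_equalityI)
    thus "q \<in> {Node f ts}" using qs(2) by simp
  qed
qed

lemma SubTree_self: "t \<in> SubTree t"
  by (cases t) auto

lemma SubTree_child: "Node f ts \<in> SubTree t \<Longrightarrow> set ts \<subseteq> SubTree t"
proof (induction t)
  case (Node g us)
  show ?case
  proof (cases "Node f ts = Node g us")
    case True
    then have "ts = us" by simp
    show ?thesis
    proof
      fix c assume "c \<in> set ts"
      then have "c \<in> set us" using \<open>ts = us\<close> by simp
      moreover have "c \<in> SubTree c" by (rule SubTree_self)
      ultimately show "c \<in> SubTree (Node g us)" by auto
    qed
  next
    case False
    then obtain u where "u \<in> set us" "Node f ts \<in> SubTree u" using Node.prems by auto
    then have "set ts \<subseteq> SubTree u" using Node.IH by blast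
    then show ?thesis using \<open>u \<in> set us\<close> by auto
  qed
qed

lemma finite_SubTree: "finite (SubTree t)"
  by (induction t) auto

lemma Series_nz: "SubTreeSeries_t t s \<noteq> 0 \<Longrightarrow> s \<in> SubTree t"
proof (induction t)
  case (Node f ts)
  show ?case
  proof (cases "Node f ts = s")
    case True then show ?thesis by auto
  next
    case False
    then have "sum_list (map (\<lambda>c. SubTreeSeries_t c s) ts) \<noteq> 0" using Node.prems by simp
    then obtain c where "c \<in> set ts" "SubTreeSeries_t c s \<noteq> 0"
      by (simp add: sum_list_eq_0_iff) blast
    then show ?thesis using Node.IH by auto
  qed
qed

lemma trees_inv: "Node f ts \<in> trees \<Sigma> \<Longrightarrow> (f, length ts) \<in> \<Sigma> \<and> (\<forall>t\<in>set ts. t \<in> trees \<Sigma>)"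
  by (erule trees.cases) auto

lemma Delta_in:
  "t \<in> trees \<Sigma> \<Longrightarrow> t \<in> SubTreeSet L \<Longrightarrow> t \<in> Delta (trans (subtree_automaton \<Sigma> L)) t"
proof (induction t)
  case (Node f ts)
  have ch: "set ts \<subseteq> SubTreeSet L"
  proof -
    obtain u where u: "u \<in> L" "Node f ts \<in> SubTree u"
      using Node.prems(2) unfolding SubTreeSet_def by (auto simp del: SubTree.simps)
    have "set ts \<subseteq> SubTree u" by (rule SubTree_child[OF u(2)])
    then show ?thesis using u(1) unfolding SubTreeSet_def by (auto simp del: SubTree.simps)
  qed
  have ti: "(f, length ts) \<in> \<Sigma>" "\<forall>c\<in>set ts. c \<in> trees \<Sigma>" using trees_inv[OF Node.prems(1)] by auto
  have IH: "c \<in> Delta (trans (subtree_automaton \<Sigma> L)) c" if c: "c \<in> set ts" for c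
  proof -
    have "c \<in> trees \<Sigma>" using ti(2) c by blast
    moreover have "c \<in> SubTreeSet L" using ch c by blast
    ultimately show ?thesis using Node.IH[OF c] by blast
  qed
  have la: "list_all2 (\<in>) ts (map (Delta (trans (subtree_automaton \<Sigma> L))) ts)"
    using IH by (auto simp: list_all2_conv_all_nth)
  have tr: "(Node f ts, f, ts) \<in> trans (subtree_automaton \<Sigma> L)"
    using ch Node.prems(2) ti(1) by (simp add: subtree_automaton_def)
  show ?case unfolding Delta.simps delta_set_def using la tr by blast
qed

theorem corollary7:
  fixes \<Sigma> :: "'f graded_alphabet" and L :: "'f tree set"
  assumes "graded_alphabet \<Sigma>" and "finite L" and "L \<subseteq> trees \<Sigma>"
  shows "is_rwta \<Sigma> (subtree_automaton \<Sigma> L) \<and> sequential \<Sigma> (subtree_automaton \<Sigma> L) \<and>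
         (\<forall>t \<in> trees \<Sigma>. realized (subtree_automaton \<Sigma> L) t = SubTreeSeries L t)"
proof (intro conjI ballI)
  show "is_rwta \<Sigma> (subtree_automaton \<Sigma> L)"
  proof -
    have fin: "finite (SubTreeSet L)" unfolding SubTreeSet_def using assms(2) finite_SubTree by blast
    show ?thesis unfolding is_rwta_def subtree_automaton_def using fin by auto
  qed
  show "sequential \<Sigma> (subtree_automaton \<Sigma> L)"
    unfolding sequential_def
  proof
    fix t show "card (Delta (trans (subtree_automaton \<Sigma> L)) t) \<le> 1"
      using card_mono[OF _ Delta_sub[of \<Sigma> L t]] by simp
  qed
  fix t assume t: "t \<in> trees \<Sigma>"
  show "realized (subtree_automaton \<Sigma> L) t = SubTreeSeries L t"
  proof (cases "t \<in> SubTreeSet L")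
    case True
    then have "Delta (trans (subtree_automaton \<Sigma> L)) t = {t}"
      using Delta_in[OF t True] Delta_sub[of \<Sigma> L t] by blast
    then show ?thesis unfolding realized_def by (simp add: subtree_automaton_def)
  next
    case False
    have "Delta (trans (subtree_automaton \<Sigma> L)) t = {}"
    proof -
      have "Delta (trans (subtree_automaton \<Sigma> L)) t \<subseteq> SubTreeSet L"
        by (cases t) (simp only: Delta.simps delta_set_def subtree_automaton_def rwta.simps, blast)
      then show ?thesis using False Delta_sub[of \<Sigma> L t] by blast
    qed
    moreover have "SubTreeSeries L t = 0"
      unfolding SubTreeSeries_def
    proof (rule sum.neutral, rule ballI, rule ccontr)
      fix u assume "u \<in> L" "SubTreeSeries_t u t \<noteq> 0"
      then have "t \<in> SubTreeSet L" using Series_nz unfolding SubTreeSet_def by blast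
      then show False using False by blast
    qed
    ultimately show ?thesis by (simp add: realized_def)
  qed
qed

end
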